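(* Let $\mathbb{F}$ be a field, and let $\mathcal{C}\subseteq\mathbb{F}^N$ be a systematic linear code of dimension $n$ which is an $(s,t)$-batch code, where $1\le s\le t$. Then for every integer $u$ with $1\le u\le s$ (and $u\le n$) and every integer $v$ with $1\le v\le \lfloor t/u\rfloor-1$, the code $\mathcal{C}$ is a $(u,v)$-ordered-batch code.
   Context: For a positive integer $m$, $[m]=\{1,\dots,m\}$. A linear code $\mathcal{C}\subseteq\mathbb{F}^N$ of dimension $n$ is systematic if for every $\mathbf{x}\in\mathbb{F}^n$ there is a unique codeword whose first $n$ coordinates equal $\mathbf{x}$ (coordinates $1,\dots,n$ are the information symbols). For $\mathbf{c}\in\mathcal{C}$ write $\mathbf{c}(i)$ for its $i$-th coordinate. A set $R\subseteq[N]$ is a recovering set for $i\in[n]$ if there are scalars $\lambda_k\in\mathbb{F}$ ($k\in R$) with $\mathbf{c}(i)=\sum_{k\in R}\lambda_k\mathbf{c}(k)$ for all $\mathbf{c}\in\mathcal{C}$. $(s,t)$-batch code ($1\le s\le t$): a systematic linear code $\mathcal{C}\subseteq\mathbb{F}^N$ of dimension $n$ such that for every choice of indices $i_1,\dots,i_s\in[n]$ (not necessarily distinct) and nonnegative integers $a_1,\dots,a_s$ with $\sum_{j=1}^s a_j=t$, there exist $t$ pairwise disjoint sets $R_{j,l}\subseteq[N]$ ($j\in[s]$, $l\in[a_j]$) such that each $R_{j,l}$ is a recovering set for $i_j$. $(u,v)$-ordered-batch code ($u,v$ positive integers): a systematic linear code $\mathcal{C}\subseteq\mathbb{F}^N$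 of dimension $n$ such that for every set $I=\{i_1,\dots,i_u\}\subseteq[n]$ of $u$ distinct indices there exist $uv$ pairwise disjoint sets $R_{j,l}\subseteq[N]$ ($j\in[u]$, $l\in[v]$), each $R_{j,l}$ a recovering set for $i_j$, such that the directed graph $D_I$ with vertex set $I$ and an arc $i_j\to i_k$ (for $j,k\in[u]$, $j=k$ allowed, giving a loop) whenever $i_k\in\bigcup_{l=1}^{v}R_{j,l}$, is acyclic (has no directed cycles, in particular no loops). *)

theory Defs
  imports Main
begin

text \<open>Vectors of F^N are modelled as functions nat => 'a that vanish outside the
coordinate set {1..N}. A code is a set of such vectors.\<close>

definition linear_code :: "nat \<Rightarrow> (nat \<Rightarrow> 'a::field) set \<Rightarrow> bool" where
  "linear_code N C \<longleftrightarrow>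
     (\<forall>c\<in>C. \<forall>k. k \<notin> {1..N} \<longrightarrow> c k = 0) \<and>
     (\<lambda>_. 0) \<in> C \<and>
     (\<forall>c\<in>C. \<forall>d\<in>C. (\<lambda>k. c k + d k) \<in> C) \<and>
     (\<forall>a. \<forall>c\<in>C. (\<lambda>k. a * c k) \<in> C)"

definition systematic_code :: "nat \<Rightarrow> nat \<Rightarrow> (nat \<Rightarrow> 'a::field) set \<Rightarrow> bool" where
  "systematic_code N n C \<longleftrightarrow> linear_code N C \<and> n \<le> N \<and>
     (\<forall>x :: nat \<Rightarrow> 'a. \<exists>!c. c \<in> C \<and> (\<forall>i\<in>{1..n}. c i = x i))"

definition recovering_set :: "nat \<Rightarrow> (nat \<Rightarrow> 'a::field) set \<Rightarrow> nat set \<Rightarrow> nat \<Rightarrow> bool" where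
  "recovering_set N C R i \<longleftrightarrow> R \<subseteq> {1..N} \<and>
     (\<exists>lam :: nat \<Rightarrow> 'a. \<forall>c\<in>C. c i = (\<Sum>k\<in>R. lam k * c k))"

definition batch_code :: "nat \<Rightarrow> nat \<Rightarrow> (nat \<Rightarrow> 'a::field) set \<Rightarrow> nat \<Rightarrow> nat \<Rightarrow> bool" where
  "batch_code N n C s t \<longleftrightarrow> systematic_code N n C \<and>
     (\<forall>(ind :: nat \<Rightarrow> nat) (a :: nat \<Rightarrow> nat).
        (\<forall>j\<in>{1..s}. ind j \<in> {1..n}) \<and> (\<Sum>j=1..s. a j) = t \<longrightarrow>
        (\<exists>R :: nat \<times> nat \<Rightarrow> nat set.
           (\<forall>j\<in>{1..s}. \<forall>l\<in>{1..a j}. recovering_set N C (R (j, l)) (ind j)) \<and>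
           (\<forall>p\<in>{(j, l). j \<in> {1..s} \<and> l \<in> {1..a j}}.
              \<forall>q\<in>{(j, l). j \<in> {1..s} \<and> l \<in> {1..a j}}.
                p \<noteq> q \<longrightarrow> R p \<inter> R q = {})))"

definition ordered_batch_code :: "nat \<Rightarrow> nat \<Rightarrow> (nat \<Rightarrow> 'a::field) set \<Rightarrow> nat \<Rightarrow> nat \<Rightarrow> bool" where
  "ordered_batch_code N n C u v \<longleftrightarrow> systematic_code N n C \<and>
     (\<forall>ind :: nat \<Rightarrow> nat.
        inj_on ind {1..u} \<and> ind ` {1..u} \<subseteq> {1..n} \<longrightarrow>
        (\<exists>R :: nat \<times> nat \<Rightarrow> nat set.
           (\<forall>j\<in>{1..u}. \<forall>l\<in>{1..v}. recovering_set N C (R (j, l)) (ind j)) \<and>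
           (\<forall>p\<in>{1..u} \<times> {1..v}. \<forall>q\<in>{1..u} \<times> {1..v}. p \<noteq> q \<longrightarrow> R p \<inter> R q = {}) \<and>
           acyclic {(ind j, ind k) | j k. j \<in> {1..u} \<and> k \<in> {1..u} \<and>
                      ind k \<in> (\<Union>l\<in>{1..v}. R (j, l))}))"

end

theory Submission
  imports Defs
begin

lemma indeg_path:
  assumes inj: "\<forall>a b k. (a,k)\<in>E \<longrightarrow> (b,k)\<in>E \<longrightarrow> a = b" and GE: "G \<subseteq> E"
    and cyc: "(x,x) \<in> G\<^sup>+" and yx: "(y,x) \<in> E\<^sup>*"
  shows "(y,x) \<in> G\<^sup>* \<and> (x,y) \<in> G\<^sup>*"
  using yx
proof (induction rule: converse_rtrancl_induct)
  case base show ?case by simp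
next
  case (step y z)
  from step.IH have zx: "(z,x)\<in>G\<^sup>*" and xz: "(x,z)\<in>G\<^sup>*" by auto
  have "(z,x) \<in> G\<^sup>+" using zx cyc by (rule rtrancl_trancl_trancl)
  then have "(z,z) \<in> G\<^sup>+" using xz by (rule trancl_rtrancl_trancl)
  then obtain w where zw: "(z,w)\<in>G\<^sup>*" and wz: "(w,z)\<in>G" using tranclD2 by metis
  have "w = y" using inj GE step.hyps(1) wz by blast
  with wz have yz: "(y,z) \<in> G" by simp
  show ?case
  proof
    show "(y,x) \<in> G\<^sup>*" using yz zx by (rule converse_rtrancl_into_rtrancl)
    show "(x,y) \<in> G\<^sup>*" using xz zw \<open>w = y\<close> by auto
  qed
qed

lemma key:
  fixes E :: "('v::linorder \<times> 'v) set" and lab :: "'v \<Rightarrow> 'v \<Rightarrow> 'l"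
  assumes fin: "finite E" and inj: "\<forall>a b k. (a,k)\<in>E \<longrightarrow> (b,k)\<in>E \<longrightarrow> a = b"
  shows "\<exists>d. acyclic {(a,b). (a,b)\<in>E \<and> lab a b \<noteq> d a}"
proof -
  define cond where "cond p m \<longleftrightarrow> (p,m)\<in>E \<and> (m,m)\<in>E\<^sup>+ \<and>
      (\<forall>y. (y,m)\<in>E\<^sup>+ \<and> (m,y)\<in>E\<^sup>+ \<longrightarrow> m \<le> y)" for p m
  define d where "d p = lab p (SOME m. cond p m)" for p
  define G where "G = {(a,b). (a,b)\<in>E \<and> lab a b \<noteq> d a}"
  have GE: "G \<subseteq> E" unfolding G_def by auto
  have "acyclic G"
    unfolding acyclic_def
  proof (intro allI notI)
    fix x assume xG: "(x,x) \<in> G\<^sup>+"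
    have xE: "(x,x)\<in>E\<^sup>+" using trancl_mono[OF xG GE] .
    define K where "K = {y. (y,x)\<in>E\<^sup>+ \<and> (x,y)\<in>E\<^sup>+}"
    have "K \<subseteq> Domain (E\<^sup>+)" unfolding K_def by blast
    hence finK: "finite K" using fin by (metis finite_Domain finite_subset trancl_domain)
    have "x \<in> K" using xE unfolding K_def by auto
    define m where "m = Min K"
    have mK: "m \<in> K" using finK \<open>x\<in>K\<close> unfolding m_def by (metis Min_in empty_iff)
    have mmin: "\<forall>y\<in>K. m \<le> y" using finK unfolding m_def by auto
    have "(m,x) \<in> E\<^sup>*" using mK unfolding K_def by auto
    from indeg_path[OF inj GE xG this] have mxG: "(m,x)\<in>G\<^sup>*" and xmG: "(x,m)\<in>G\<^sup>*" by auto
    have "(m,x) \<in> G\<^sup>+" using mxG xG by (rule rtrancl_trancl_trancl)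
    then have "(m,m) \<in> G\<^sup>+" using xmG by (rule trancl_rtrancl_trancl)
    then obtain p where mpG: "(m,p)\<in>G\<^sup>*" and pmG: "(p,m)\<in>G" using tranclD2 by metis
    have pmE: "(p,m) \<in> E" using pmG GE by auto
    have mpE: "(m,p) \<in> E\<^sup>*" using rtrancl_mono[OF GE] mpG by auto
    have mmE: "(m,m)\<in>E\<^sup>+" using trancl_mono[OF \<open>(m,m) \<in> G\<^sup>+\<close> GE] .
    have cm: "cond p m"
      unfolding cond_def
    proof (intro conjI allI impI pmE mmE)
      fix y assume "(y,m)\<in>E\<^sup>+ \<and> (m,y)\<in>E\<^sup>+"
      moreover have "(m,x)\<in>E\<^sup>+" "(x,m)\<in>E\<^sup>+" using mK unfolding K_def by auto
      ultimately have "y \<in> K" unfolding K_def by (auto intro: trancl_trans)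
      then show "m \<le> y" using mmin by auto
    qed
    define m' where "m' = (SOME m. cond p m)"
    have cm': "cond p m'" unfolding m'_def using cm by (rule someI)
    have "m' = m"
    proof -
      have pm'E: "(p,m')\<in>E" and m'm'E: "(m',m')\<in>E\<^sup>+" using cm' unfolding cond_def by auto
      then obtain q where m'q: "(m',q)\<in>E\<^sup>*" and qm': "(q,m')\<in>E" using tranclD2 by metis
      have "q = p" using inj qm' pm'E by blast
      have a1: "(m',m)\<in>E\<^sup>+" using m'q pmE \<open>q = p\<close> by (metis rtrancl_into_trancl1)
      have a2: "(m,m')\<in>E\<^sup>+" using mpE pm'E by (metis rtrancl_into_trancl1)
      have "m' \<le> m" using cm' a1 a2 unfolding cond_def by auto
      moreover have "m \<le> m'" using cm a1 a2 unfolding cond_def by auto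
      ultimately show ?thesis by simp
    qed
    then have "d p = lab p m" unfolding d_def m'_def by simp
    with pmG show False unfolding G_def by auto
  qed
  then show ?thesis unfolding G_def by blast
qed

theorem proposition1:
  fixes C :: "(nat \<Rightarrow> 'a::field) set" and N n s t u v :: nat
  assumes "batch_code N n C s t"
    and "1 \<le> s" and "s \<le> t"
    and "1 \<le> u" and "u \<le> s" and "u \<le> n"
    and "1 \<le> v" and "v \<le> t div u - 1"
  shows "ordered_batch_code N n C u v"
proof -
  have bc: "systematic_code N n C" using assms(1) unfolding batch_code_def by auto
  have tu: "u * (v+1) \<le> t"
  proof -
    have "v + 1 \<le> t div u" using assms(7,8) by linarith
    then have "u * (v+1) \<le> u * (t div u)" by (rule mult_le_mono2)
    also have "\<dots> \<le> t" by simp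
    finally show ?thesis .
  qed
  show ?thesis
    unfolding ordered_batch_code_def
  proof (intro conjI bc allI impI)
    fix ind :: "nat \<Rightarrow> nat"
    assume "inj_on ind {1..u} \<and> ind ` {1..u} \<subseteq> {1..n}"
    then have injind: "inj_on ind {1..u}" and indr: "ind ` {1..u} \<subseteq> {1..n}" by auto
    define a where "a j = (if j = 1 then t - (u-1)*(v+1) else if 1 \<le> j \<and> j \<le> u then v+1 else 0)" for j
    define ind' where "ind' j = (if j \<le> u then ind j else ind 1)" for j
    have i1: "ind 1 \<in> {1..n}" using indr assms(4) by (meson atLeastAtMost_iff image_subset_iff order.refl)
    have ind'r: "\<forall>j\<in>{1..s}. ind' j \<in> {1..n}"
      using indr i1 unfolding ind'_def by (auto simp: image_subset_iff)
    have asum: "(\<Sum>j=1..s. a j) = t"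
    proof -
      have e: "a j = (if j = 1 then t - (u-1)*(v+1) else 0) + (if j \<in> {2..u} then v+1 else 0)" for j
        unfolding a_def by auto
      have s1: "(\<Sum>j=1..s. (if j = 1 then t - (u-1)*(v+1) else 0)) = t - (u-1)*(v+1)"
        using assms(2) by (simp add: sum.delta)
      have "(\<Sum>j=1..s. (if j \<in> {2..u} then v+1 else (0::nat))) = (\<Sum>j\<in>{1..s} \<inter> {2..u}. v+1)"
        by (rule sum.inter_restrict[symmetric]) simp
      also have "{1..s} \<inter> {2..u} = {2..u}" using assms(5) by auto
      also have "(\<Sum>j\<in>{2..u}. v+1) = (u-1)*(v+1)" by simp
      finally have s2: "(\<Sum>j=1..s. (if j \<in> {2..u} then v+1 else (0::nat))) = (u-1)*(v+1)" .
      have "(u-1)*(v+1) \<le> t" using tu by (metis diff_le_self le_trans mult_le_mono1)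
      then show ?thesis unfolding e sum.distrib s1 s2 by simp
    qed
    obtain R where recR: "\<forall>j\<in>{1..s}. \<forall>l\<in>{1..a j}. recovering_set N C (R (j, l)) (ind' j)"
      and disjR: "\<forall>p\<in>{(j, l). j \<in> {1..s} \<and> l \<in> {1..a j}}.
              \<forall>q\<in>{(j, l). j \<in> {1..s} \<and> l \<in> {1..a j}}. p \<noteq> q \<longrightarrow> R p \<inter> R q = {}"
      using assms(1) ind'r asum unfolding batch_code_def by blast
    have aj: "v+1 \<le> a j" if "j \<in> {1..u}" for j
    proof -
      have "(u-1)*(v+1) + (v+1) \<le> t" using tu assms(4)
        by (metis Suc_diff_1 add.commute le_add_diff_inverse less_eq_Suc_le mult_Suc not_less_eq_eq order.refl
              plus_1_eq_Suc zero_less_Suc )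
      then show ?thesis using that unfolding a_def by auto
    qed
    have rec: "recovering_set N C (R (j, l)) (ind j)" if "j \<in> {1..u}" "l \<in> {1..v+1}" for j l
    proof -
      have "j \<in> {1..s}" "l \<in> {1..a j}" using that aj[OF that(1)] assms(5) by auto
      then have "recovering_set N C (R (j, l)) (ind' j)" using recR by blast
      then show ?thesis using that unfolding ind'_def by simp
    qed
    have disj: "R (j,l) \<inter> R (j',l') = {}" if "j \<in> {1..u}" "l \<in> {1..v+1}" "j' \<in> {1..u}" "l' \<in> {1..v+1}"
      "(j,l) \<noteq> (j',l')" for j l j' l'
    proof -
      have "(j,l) \<in> {(j, l). j \<in> {1..s} \<and> l \<in> {1..a j}}" "(j',l') \<in> {(j, l). j \<in> {1..s} \<and> l \<in> {1..a j}}"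
        using that aj[OF that(1)] aj[OF that(3)] assms(5) by auto
      then show ?thesis using disjR that(5) by blast
    qed
    define E where "E = {(ind j, ind k) | j k. j\<in>{1..u} \<and> k\<in>{1..u} \<and> (\<exists>l\<in>{1..v+1}. ind k \<in> R(j,l))}"
    define lab where "lab x y = (SOME l. \<exists>j\<in>{1..u}. x = ind j \<and> l\<in>{1..v+1} \<and> y \<in> R(j,l))" for x y
    have finE: "finite E"
    proof (rule finite_subset)
      show "E \<subseteq> ind`{1..u} \<times> ind`{1..u}" unfolding E_def by auto
    qed auto
    have injE: "\<forall>x y k. (x,k)\<in>E \<longrightarrow> (y,k)\<in>E \<longrightarrow> x = y"
    proof (intro allI impI)
      fix x y k assume xk: "(x,k)\<in>E" and yk: "(y,k)\<in>E"
      from xk obtain j k1 l where h1: "x = ind j" "k = ind k1" "j\<in>{1..u}" "l\<in>{1..v+1}" "ind k1 \<in> R(j,l)"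
        unfolding E_def by blast
      from yk obtain j' k2 l' where h2: "y = ind j'" "k = ind k2" "j'\<in>{1..u}" "l'\<in>{1..v+1}" "ind k2 \<in> R(j',l')"
        unfolding E_def by blast
      have "k \<in> R(j,l) \<inter> R(j',l')" using h1 h2 by simp
      then have "(j,l) = (j',l')" using disj[OF h1(3,4) h2(3,4)] by blast
      then show "x = y" using h1(1) h2(1) by simp
    qed
    obtain d where acd: "acyclic {(x,y). (x,y)\<in>E \<and> lab x y \<noteq> d x}"
      using key[OF finE injE, of lab] by blast
    define sg where "sg j l = (if l < d (ind j) then l else Suc l)" for j l
    define R' where "R' p = R (fst p, sg (fst p) (snd p))" for p
    have sgr: "sg j l \<in> {1..v+1}" if "l \<in> {1..v}" for j l
      using that unfolding sg_def by auto
    have sgd: "sg j l \<noteq> d (ind j)" for j l unfolding sg_def by auto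
    show "\<exists>R. (\<forall>j\<in>{1..u}. \<forall>l\<in>{1..v}. recovering_set N C (R (j, l)) (ind j)) \<and>
           (\<forall>p\<in>{1..u} \<times> {1..v}. \<forall>q\<in>{1..u} \<times> {1..v}. p \<noteq> q \<longrightarrow> R p \<inter> R q = {}) \<and>
           acyclic {(ind j, ind k) | j k. j \<in> {1..u} \<and> k \<in> {1..u} \<and>
                      ind k \<in> (\<Union>l\<in>{1..v}. R (j, l))}"
    proof (intro exI conjI ballI impI)
      fix j l assume "j \<in> {1..u}" "l \<in> {1..v}"
      then show "recovering_set N C (R' (j, l)) (ind j)" unfolding R'_def using rec sgr by auto
    next
      fix p q assume p: "p \<in> {1..u} \<times> {1..v}" and q: "q \<in> {1..u} \<times> {1..v}" and pq: "p \<noteq> q"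
      obtain j l where pj: "p = (j,l)" by force
      obtain j' l' where qj: "q = (j',l')" by force
      have "(j, sg j l) \<noteq> (j', sg j' l')"
      proof
        assume h: "(j, sg j l) = (j', sg j' l')"
        then have "j = j'" by simp
        with h have "sg j l = sg j l'" by simp
        then have "l = l'" unfolding sg_def by (simp split: if_splits)
        with \<open>j = j'\<close> pq pj qj show False by simp
      qed
      moreover have "j \<in> {1..u}" "l \<in> {1..v}" "j' \<in> {1..u}" "l' \<in> {1..v}" using p q pj qj by auto
      ultimately have "R (j, sg j l) \<inter> R (j', sg j' l') = {}" using disj sgr by blast
      then show "R' p \<inter> R' q = {}" unfolding R'_def pj qj by simp
    next
      show "acyclic {(ind j, ind k) | j k. j \<in> {1..u} \<and> k \<in> {1..u} \<and>
                      ind k \<in> (\<Union>l\<in>{1..v}. R' (j, l))}"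
      proof (rule acyclic_subset[OF acd], safe)
        fix j k l assume j: "j \<in> {1..u}" and k: "k \<in> {1..u}" and l: "l \<in> {1..v}"
          and kin: "ind k \<in> R' (j, l)"
        have kin': "ind k \<in> R (j, sg j l)" using kin unfolding R'_def by simp
        show "(ind j, ind k) \<in> E" unfolding E_def using j k kin' sgr[OF l] by blast
        assume "lab (ind j) (ind k) = d (ind j)"
        moreover have "lab (ind j) (ind k) = sg j l"
        proof -
          have "\<exists>l1. \<exists>j1\<in>{1..u}. ind j = ind j1 \<and> l1\<in>{1..v+1} \<and> ind k \<in> R(j1,l1)"
            using j kin' sgr[OF l] by blast
          then have "\<exists>j1\<in>{1..u}. ind j = ind j1 \<and> lab (ind j) (ind k)\<in>{1..v+1} \<and> ind k \<in> R(j1,lab (ind j) (ind k))"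
            unfolding lab_def by (rule someI_ex)
          then obtain j1 where j1: "j1\<in>{1..u}" "ind j = ind j1" "lab (ind j) (ind k)\<in>{1..v+1}"
            "ind k \<in> R(j1,lab (ind j) (ind k))" by blast
          have "j1 = j" using injind j1 j by (metis inj_on_def)
          then have "R (j, lab (ind j) (ind k)) \<inter> R (j, sg j l) \<noteq> {}" using j1 kin' by blast
          then show ?thesis using disj[of j "lab (ind j) (ind k)" j "sg j l"] j1 j sgr[OF l] by blast
        qed
        ultimately show False using sgd by simp
      qed
    qed
  qed
qed

end
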